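(* Let $P_7(\lambda;m,\varepsilon)$ be the polynomial in $\lambda$ defined in the context. There exist $\varepsilon_0>0$ and $\delta>0$, and a unique function $m^c:(0,\varepsilon_0)\to(6-\delta,6+\delta)$ with $m^c(\varepsilon)\to 6$ as $\varepsilon\to0^+$, such that for every $\varepsilon\in(0,\varepsilon_0)$ the polynomial $\widetilde P_7(\lambda;\varepsilon):=P_7(\lambda;m^c(\varepsilon),\varepsilon)$ has exactly one pair of purely imaginary roots $\pm i\omega(\varepsilon)$, with $\omega(\varepsilon)>0$. Moreover, $\omega(\varepsilon)$ converges to $\sqrt3$ as $\varepsilon$ tends to $0$.
   Context: $P_7(\lambda;m,\varepsilon)=a_0\lambda^7+a_1\lambda^6+a_2\lambda^5+a_3\lambda^4+a_4\lambda^3+a_5\lambda^2+a_6\lambda+a_7$ with $a_i=a_i(m,\varepsilon)$: $a_0=2^{11}(\varepsilon-1)^4\varepsilon^2$; $a_1=-2^{11}(\varepsilon^2-\varepsilon)^2[(5\varepsilon^2-2\varepsilon+1)m^2+2(\varepsilon+1)^2m+4]$; $a_2=(\varepsilon^2-\varepsilon)[\varepsilon(59\varepsilon^3-9\varepsilon^2+17\varepsilon-3)m^4+4\varepsilon(15\varepsilon^3+15\varepsilon^2+17\varepsilon+1)m^3+4(\varepsilon+2)(\varepsilon^3+9\varepsilon^2+5\varepsilon+1)m^2-8(2\varepsilon^3-3\varepsilon^2-4\varepsilon-3)m-8(\varepsilon-1)(\varepsilon+2)]$; $a_3=2^7[-\varepsilon^2(5\varepsilon-1)(9\varepsilon^3+\varepsilon^2+7\varepsilon-1)m^6-2\varepsilon^2(59\varepsilon^4-8\varepsilon^3+74\varepsilon^2+8\varepsilon-5)m^5-4\varepsilon(4\varepsilon^5+27\varepsilon^4+24\varepsilon^3+37\varepsilon^2+6\varepsilon-2)m^4+4\varepsilon(4\varepsilon^5+20\varepsilon^4-31\varepsilon^3-23\varepsilon^2-33\varepsilon-1)m^3+4(9\varepsilon^5+27\varepsilon^4-15\varepsilon^3-24\varepsilon^2-12\varepsilon-1)m^2+4(\varepsilon^4+17\varepsilon^3-7\varepsilon^2-9\varepsilon-2)m-4(\varepsilon-1)^2(2\varepsilon+1)]$;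 $a_4=2^3[\varepsilon^2(9\varepsilon-1)^2(\varepsilon-1)^2m^8+8\varepsilon^2(\varepsilon-1)(45\varepsilon^3+5\varepsilon^2-21\varepsilon+3)m^7+8\varepsilon(21\varepsilon^5-58\varepsilon^4-84\varepsilon^3-32\varepsilon^2+27\varepsilon-2)m^6-16\varepsilon(34\varepsilon^5+42\varepsilon^4+113\varepsilon^3+81\varepsilon^2-7\varepsilon-7)m^5-16(7\varepsilon^6+96\varepsilon^5+75\varepsilon^4+176\varepsilon^3+42\varepsilon^2-10\varepsilon-2)m^4+16\varepsilon(6\varepsilon^4-75\varepsilon^3-65\varepsilon^2-117\varepsilon-5)m^3+16(29\varepsilon^4-7\varepsilon^3-48\varepsilon^2-31\varepsilon-7)m^2+32(\varepsilon-1)(7\varepsilon^2+14\varepsilon+3)m-16(\varepsilon-1)^2]$; $a_5=2^5m[\varepsilon^2(\varepsilon-1)^2(9\varepsilon^2+\varepsilon-2)m^7+(\varepsilon^2-\varepsilon)(38\varepsilon^4+46\varepsilon^3-39\varepsilon^2+3)m^6+(36\varepsilon^6+33\varepsilon^5-123\varepsilon^4-95\varepsilon^3+54\varepsilon^2-1)m^5-(8\varepsilon^6-8\varepsilon^5+169\varepsilon^4+233\varepsilon^3+25\varepsilon^2-41\varepsilon-2)m^4-(60\varepsilon^5+110\varepsilon^4+320\varepsilon^3+129\varepsilon^2-22\varepsilon-21)m^3-4(16\varepsilon^4+37\varepsilon^3+41\varepsilon^2+7\varepsilon-5)m^2+2(4\varepsilon^3-37\varepsilon^2-10\varepsilon-5)m+4(5\varepsilon^2-2\varepsilon-3)]$;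 $a_6=2^3m[2\varepsilon^2(\varepsilon-1)^2(\varepsilon+1)(2\varepsilon-1)m^7+(\varepsilon^2-\varepsilon)(16\varepsilon^4+58\varepsilon^3-19\varepsilon^2-10\varepsilon+3)m^6+(16\varepsilon^6+72\varepsilon^5-39\varepsilon^4-171\varepsilon^3+42\varepsilon^2+17\varepsilon-1)m^5+2(20\varepsilon^5-12\varepsilon^4-113\varepsilon^3-69\varepsilon^2+41\varepsilon+5)m^4-(2\varepsilon+1)(18\varepsilon^3+81\varepsilon^2+80\varepsilon-51)m^3-4(28\varepsilon^3+31\varepsilon^2+20\varepsilon-15)m^2-4(11\varepsilon-3)(\varepsilon+1)m-8(1-\varepsilon)]$; $a_7=2^4(m^2+m^3)[\varepsilon^2(\varepsilon^2-1)(2\varepsilon-1)m^4+\varepsilon(2\varepsilon-1)(3\varepsilon^2-3\varepsilon-2)m^3+(2\varepsilon^4-13\varepsilon^2+4\varepsilon+1)m^2-3(2\varepsilon-1)(\varepsilon+1)m+2(1-2\varepsilon)]$. *)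

theory Defs
  imports "HOL-Analysis.Analysis" "HOL-Computational_Algebra.Polynomial"
begin

definition a0 :: "real \<Rightarrow> real \<Rightarrow> real" where
  "a0 m e = 2^11 * (e - 1)^4 * e^2"

definition a1 :: "real \<Rightarrow> real \<Rightarrow> real" where
  "a1 m e = - (2^11) * (e^2 - e)^2 * ((5*e^2 - 2*e + 1)*m^2 + 2*(e+1)^2*m + 4)"

definition a2 :: "real \<Rightarrow> real \<Rightarrow> real" where
  "a2 m e = (e^2 - e) * (e*(59*e^3 - 9*e^2 + 17*e - 3)*m^4
     + 4*e*(15*e^3 + 15*e^2 + 17*e + 1)*m^3
     + 4*(e+2)*(e^3 + 9*e^2 + 5*e + 1)*m^2
     - 8*(2*e^3 - 3*e^2 - 4*e - 3)*m
     - 8*(e - 1)*(e + 2))"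

definition a3 :: "real \<Rightarrow> real \<Rightarrow> real" where
  "a3 m e = 2^7 * (- (e^2)*(5*e - 1)*(9*e^3 + e^2 + 7*e - 1)*m^6
     - 2*e^2*(59*e^4 - 8*e^3 + 74*e^2 + 8*e - 5)*m^5
     - 4*e*(4*e^5 + 27*e^4 + 24*e^3 + 37*e^2 + 6*e - 2)*m^4
     + 4*e*(4*e^5 + 20*e^4 - 31*e^3 - 23*e^2 - 33*e - 1)*m^3
     + 4*(9*e^5 + 27*e^4 - 15*e^3 - 24*e^2 - 12*e - 1)*m^2
     + 4*(e^4 + 17*e^3 - 7*e^2 - 9*e - 2)*m
     - 4*(e - 1)^2*(2*e + 1))"

definition a4 :: "real \<Rightarrow> real \<Rightarrow> real" where
  "a4 m e = 2^3 * (e^2*(9*e - 1)^2*(e - 1)^2*m^8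
     + 8*e^2*(e - 1)*(45*e^3 + 5*e^2 - 21*e + 3)*m^7
     + 8*e*(21*e^5 - 58*e^4 - 84*e^3 - 32*e^2 + 27*e - 2)*m^6
     - 16*e*(34*e^5 + 42*e^4 + 113*e^3 + 81*e^2 - 7*e - 7)*m^5
     - 16*(7*e^6 + 96*e^5 + 75*e^4 + 176*e^3 + 42*e^2 - 10*e - 2)*m^4
     + 16*e*(6*e^4 - 75*e^3 - 65*e^2 - 117*e - 5)*m^3
     + 16*(29*e^4 - 7*e^3 - 48*e^2 - 31*e - 7)*m^2
     + 32*(e - 1)*(7*e^2 + 14*e + 3)*m
     - 16*(e - 1)^2)"

definition a5 :: "real \<Rightarrow> real \<Rightarrow> real" where
  "a5 m e = 2^5 * m * (e^2*(e - 1)^2*(9*e^2 + e - 2)*m^7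
     + (e^2 - e)*(38*e^4 + 46*e^3 - 39*e^2 + 3)*m^6
     + (36*e^6 + 33*e^5 - 123*e^4 - 95*e^3 + 54*e^2 - 1)*m^5
     - (8*e^6 - 8*e^5 + 169*e^4 + 233*e^3 + 25*e^2 - 41*e - 2)*m^4
     - (60*e^5 + 110*e^4 + 320*e^3 + 129*e^2 - 22*e - 21)*m^3
     - 4*(16*e^4 + 37*e^3 + 41*e^2 + 7*e - 5)*m^2
     + 2*(4*e^3 - 37*e^2 - 10*e - 5)*m
     + 4*(5*e^2 - 2*e - 3))"

definition a6 :: "real \<Rightarrow> real \<Rightarrow> real" where
  "a6 m e = 2^3 * m * (2*e^2*(e - 1)^2*(e + 1)*(2*e - 1)*m^7
     + (e^2 - e)*(16*e^4 + 58*e^3 - 19*e^2 - 10*e + 3)*m^6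
     + (16*e^6 + 72*e^5 - 39*e^4 - 171*e^3 + 42*e^2 + 17*e - 1)*m^5
     + 2*(20*e^5 - 12*e^4 - 113*e^3 - 69*e^2 + 41*e + 5)*m^4
     - (2*e + 1)*(18*e^3 + 81*e^2 + 80*e - 51)*m^3
     - 4*(28*e^3 + 31*e^2 + 20*e - 15)*m^2
     - 4*(11*e - 3)*(e + 1)*m
     - 8*(1 - e))"

definition a7 :: "real \<Rightarrow> real \<Rightarrow> real" where
  "a7 m e = 2^4 * (m^2 + m^3) * (e^2*(e^2 - 1)*(2*e - 1)*m^4
     + e*(2*e - 1)*(3*e^2 - 3*e - 2)*m^3
     + (2*e^4 - 13*e^2 + 4*e + 1)*m^2
     - 3*(2*e - 1)*(e + 1)*m
     + 2*(1 - 2*e))"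

definition P7 :: "real \<Rightarrow> real \<Rightarrow> complex poly" where
  "P7 m e = map_poly complex_of_real
     [: a7 m e, a6 m e, a5 m e, a4 m e, a3 m e, a2 m e, a1 m e, a0 m e :]"

definition unique_imag_pair :: "complex poly \<Rightarrow> real \<Rightarrow> bool" where
  "unique_imag_pair p w \<longleftrightarrow> w > 0 \<and>
     {z. poly p z = 0 \<and> Re z = 0 \<and> Im z \<noteq> 0} = {\<i> * of_real w, - \<i> * of_real w}"

end

theory Submission
  imports Defs
begin

definition da1 :: "real \<Rightarrow> real \<Rightarrow> real" where
  "da1 m e = - 20480*m*e^6 + 49152*m*e^5 - 40960*m*e^4 + 16384*m*e^3 - 4096*m*e^2 - 4096*e^6 + 8192*e^4 - 4096*e^2"

lemma d_a1: "((\<lambda>m. a1 m e) has_real_derivative da1 m e) (at m)"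
  unfolding a1_def da1_def
  apply (rule derivative_eq_intros refl)+
  apply simp
  apply algebra
  done

definition da2 :: "real \<Rightarrow> real \<Rightarrow> real" where
  "da2 m e = 236*m^3*e^6 - 272*m^3*e^5 + 104*m^3*e^4 - 80*m^3*e^3 + 12*m^3*e^2 + 180*m^2*e^6 + 24*m^2*e^4 - 192*m^2*e^3 - 12*m^2*e^2 + 8*m*e^6 + 80*m*e^5 + 96*m*e^4 - 96*m*e^3 - 72*m*e^2 - 16*m*e - 16*e^5 + 40*e^4 + 8*e^3 - 8*e^2 - 24*e"

lemma d_a2: "((\<lambda>m. a2 m e) has_real_derivative da2 m e) (at m)"
  unfolding a2_def da2_def
  apply (rule derivative_eq_intros refl)+
  apply simp
  apply algebra
  done

definition da3 :: "real \<Rightarrow> real \<Rightarrow> real" where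
  "da3 m e = - 34560*m^5*e^6 + 3072*m^5*e^5 - 26112*m^5*e^4 + 9216*m^5*e^3 - 768*m^5*e^2 - 75520*m^4*e^6 + 10240*m^4*e^5 - 94720*m^4*e^4 - 10240*m^4*e^3 + 6400*m^4*e^2 - 8192*m^3*e^6 - 55296*m^3*e^5 - 49152*m^3*e^4 - 75776*m^3*e^3 - 12288*m^3*e^2 + 4096*m^3*e + 6144*m^2*e^6 + 30720*m^2*e^5 - 47616*m^2*e^4 - 35328*m^2*e^3 - 50688*m^2*e^2 - 1536*m^2*e + 9216*m*e^5 + 27648*m*e^4 - 15360*m*e^3 - 24576*m*e^2 - 12288*m*e - 1024*m + 512*e^4 + 8704*e^3 - 3584*e^2 - 4608*e - 1024"

lemma d_a3: "((\<lambda>m. a3 m e) has_real_derivative da3 m e) (at m)"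
  unfolding a3_def da3_def
  apply (rule derivative_eq_intros refl)+
  apply simp
  apply algebra
  done

definition da4 :: "real \<Rightarrow> real \<Rightarrow> real" where
  "da4 m e = 5184*m^7*e^6 - 11520*m^7*e^5 + 7552*m^7*e^4 - 1280*m^7*e^3 + 64*m^7*e^2 + 20160*m^6*e^6 - 17920*m^6*e^5 - 11648*m^6*e^4 + 10752*m^6*e^3 - 1344*m^6*e^2 + 8064*m^5*e^6 - 22272*m^5*e^5 - 32256*m^5*e^4 - 12288*m^5*e^3 + 10368*m^5*e^2 - 768*m^5*e - 21760*m^4*e^6 - 26880*m^4*e^5 - 72320*m^4*e^4 - 51840*m^4*e^3 + 4480*m^4*e^2 + 4480*m^4*e - 3584*m^3*e^6 - 49152*m^3*e^5 - 38400*m^3*e^4 - 90112*m^3*e^3 - 21504*m^3*e^2 + 5120*m^3*e + 1024*m^3 + 2304*m^2*e^5 - 28800*m^2*e^4 - 24960*m^2*e^3 - 44928*m^2*e^2 - 1920*m^2*e + 7424*m*e^4 - 1792*m*e^3 - 12288*m*e^2 - 7936*m*e - 1792*m + 1792*e^3 + 1792*e^2 - 2816*e - 768"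

lemma d_a4: "((\<lambda>m. a4 m e) has_real_derivative da4 m e) (at m)"
  unfolding a4_def da4_def
  apply (rule derivative_eq_intros refl)+
  apply simp
  apply algebra
  done

definition da5 :: "real \<Rightarrow> real \<Rightarrow> real" where
  "da5 m e = 2304*m^7*e^6 - 4352*m^7*e^5 + 1280*m^7*e^4 + 1280*m^7*e^3 - 512*m^7*e^2 + 8512*m^6*e^6 + 1792*m^6*e^5 - 19040*m^6*e^4 + 8736*m^6*e^3 + 672*m^6*e^2 - 672*m^6*e + 6912*m^5*e^6 + 6336*m^5*e^5 - 23616*m^5*e^4 - 18240*m^5*e^3 + 10368*m^5*e^2 - 192*m^5 - 1280*m^4*e^6 + 1280*m^4*e^5 - 27040*m^4*e^4 - 37280*m^4*e^3 - 4000*m^4*e^2 + 6560*m^4*e + 320*m^4 - 7680*m^3*e^5 - 14080*m^3*e^4 - 40960*m^3*e^3 - 16512*m^3*e^2 + 2816*m^3*e + 2688*m^3 - 6144*m^2*e^4 - 14208*m^2*e^3 - 15744*m^2*e^2 - 2688*m^2*e + 1920*m^2 + 512*m*e^3 - 4736*m*e^2 - 1280*m*e - 640*m + 640*e^2 - 256*e - 384"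

lemma d_a5: "((\<lambda>m. a5 m e) has_real_derivative da5 m e) (at m)"
  unfolding a5_def da5_def
  apply (rule derivative_eq_intros refl)+
  apply simp
  apply algebra
  done

definition da6 :: "real \<Rightarrow> real \<Rightarrow> real" where
  "da6 m e = 256*m^7*e^6 - 384*m^7*e^5 - 128*m^7*e^4 + 384*m^7*e^3 - 128*m^7*e^2 + 896*m^6*e^6 + 2352*m^6*e^5 - 4312*m^6*e^4 + 504*m^6*e^3 + 728*m^6*e^2 - 168*m^6*e + 768*m^5*e^6 + 3456*m^5*e^5 - 1872*m^5*e^4 - 8208*m^5*e^3 + 2016*m^5*e^2 + 816*m^5*e - 48*m^5 + 1600*m^4*e^5 - 960*m^4*e^4 - 9040*m^4*e^3 - 5520*m^4*e^2 + 3280*m^4*e + 400*m^4 - 1152*m^3*e^4 - 5760*m^3*e^3 - 7712*m^3*e^2 + 704*m^3*e + 1632*m^3 - 2688*m^2*e^3 - 2976*m^2*e^2 - 1920*m^2*e + 1440*m^2 - 704*m*e^2 - 512*m*e + 192*m + 64*e - 64"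

lemma d_a6: "((\<lambda>m. a6 m e) has_real_derivative da6 m e) (at m)"
  unfolding a6_def da6_def
  apply (rule derivative_eq_intros refl)+
  apply simp
  apply algebra
  done

definition da7 :: "real \<Rightarrow> real \<Rightarrow> real" where
  "da7 m e = 224*m^6*e^5 - 112*m^6*e^4 - 224*m^6*e^3 + 112*m^6*e^2 + 192*m^5*e^5 + 480*m^5*e^4 - 1056*m^5*e^3 + 192*m^5*e + 640*m^4*e^4 - 720*m^4*e^3 - 1120*m^4*e^2 + 480*m^4*e + 80*m^4 + 128*m^3*e^4 - 1216*m^3*e^2 + 64*m^3*e + 256*m^3 - 288*m^2*e^2 - 336*m^2*e + 240*m^2 - 128*m*e + 64*m"

lemma d_a7: "((\<lambda>m. a7 m e) has_real_derivative da7 m e) (at m)"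
  unfolding a7_def da7_def
  apply (rule derivative_eq_intros refl)+
  apply simp
  apply algebra
  done
definition RR :: "real \<Rightarrow> real \<Rightarrow> real \<Rightarrow> real" where
  "RR m e s = a7 m e - a5 m e * s + a3 m e * s^2 - a1 m e * s^3"
definition II :: "real \<Rightarrow> real \<Rightarrow> real \<Rightarrow> real" where
  "II m e s = a6 m e - a4 m e * s + a2 m e * s^2 - a0 m e * s^3"
definition DRm :: "real \<Rightarrow> real \<Rightarrow> real \<Rightarrow> real" where
  "DRm m e s = da7 m e - da5 m e * s + da3 m e * s^2 - da1 m e * s^3"
definition DIm :: "real \<Rightarrow> real \<Rightarrow> real \<Rightarrow> real" where
  "DIm m e s = da6 m e - da4 m e * s + da2 m e * s^2"
definition DRs :: "real \<Rightarrow> real \<Rightarrow> real \<Rightarrow> real" where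
  "DRs m e s = - a5 m e + 2 * a3 m e * s - 3 * a1 m e * s^2"
definition DIs :: "real \<Rightarrow> real \<Rightarrow> real \<Rightarrow> real" where
  "DIs m e s = - a4 m e + 2 * a2 m e * s - 3 * a0 m e * s^2"
definition B2 :: "real \<Rightarrow> real \<Rightarrow> real" where
  "B2 m e = e*(59*e^3 - 9*e^2 + 17*e - 3)*m^4
     + 4*e*(15*e^3 + 15*e^2 + 17*e + 1)*m^3
     + 4*(e+2)*(e^3 + 9*e^2 + 5*e + 1)*m^2
     - 8*(2*e^3 - 3*e^2 - 4*e - 3)*m
     - 8*(e - 1)*(e + 2)"

lemma a2_B2: "a2 m e = (e^2 - e) * B2 m e"
  unfolding a2_def B2_def by simp

lemma a0_nonneg: "a0 m e \<ge> 0"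
  unfolding a0_def by (simp add: zero_le_mult_iff zero_le_even_power)

lemma dRm: "((\<lambda>m. RR m e s) has_real_derivative DRm m e s) (at m)"
  unfolding RR_def DRm_def
  by (rule derivative_eq_intros d_a7 d_a5 d_a3 d_a1 refl)+ simp

lemma d_a0: "((\<lambda>m. a0 m e) has_real_derivative 0) (at m)"
  unfolding a0_def by simp

lemma dIm: "((\<lambda>m. II m e s) has_real_derivative DIm m e s) (at m)"
  unfolding II_def DIm_def
  by (rule derivative_eq_intros d_a6 d_a4 d_a2 d_a0 refl)+ simp

lemma dRs: "((\<lambda>s. RR m e s) has_real_derivative DRs m e s) (at s)"
  unfolding RR_def DRs_def
  by (rule derivative_eq_intros refl)+ (simp add: algebra_simps power2_eq_square)

lemma dIs: "((\<lambda>s. II m e s) has_real_derivative DIs m e s) (at s)"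
  unfolding II_def DIs_def
  by (rule derivative_eq_intros refl)+ (simp add: algebra_simps power2_eq_square)

lemma base_vals: "DRm 6 0 3 = 1401792" "DRs 6 0 3 = -150528" "DIm 6 0 3 = -78400" "DIs 6 0 3 = -294784"
  "a4 6 0 = 294784" "B2 6 0 = 448" "RR 6 0 3 = 0" "II 6 0 3 = 0"
  by (simp_all add: DRm_def DRs_def DIm_def DIs_def da7_def da5_def da3_def da1_def da6_def da4_def da2_def
     a0_def a1_def a2_def a3_def a4_def a5_def a6_def a7_def B2_def RR_def II_def)

definition gmin :: "real \<Rightarrow> real \<Rightarrow> real \<Rightarrow> real" where
  "gmin m e s = min (DRm m e s) (min (- DRs m e s) (min (- DIm m e s) (min (- DIs m e s) (min (a4 m e) (B2 m e)))))"

lemma cont_gmin: "isCont (\<lambda>x. gmin (fst x) (fst (snd x)) (snd (snd x))) p"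
  unfolding gmin_def DRm_def DRs_def DIm_def DIs_def B2_def
    da7_def da5_def da3_def da1_def da6_def da4_def da2_def
     a0_def a1_def a2_def a3_def a4_def a5_def a6_def a7_def
  by (intro continuous_intros)

lemma dist3: "dist (m::real,(e::real,s::real)) (a,(b,c)) \<le> \<bar>m-a\<bar> + \<bar>e-b\<bar> + \<bar>s-c\<bar>"
proof -
  have "dist (m,(e,s)) (a,(b,c)) = sqrt ((m-a)^2 + (sqrt ((e-b)^2 + (s-c)^2))^2)"
    by (simp add: dist_Pair_Pair dist_real_def)
  also have "\<dots> \<le> \<bar>m-a\<bar> + \<bar>sqrt ((e-b)^2 + (s-c)^2)\<bar>"
    by (rule sqrt_sum_squares_le_sum_abs)
  also have "\<bar>sqrt ((e-b)^2 + (s-c)^2)\<bar> \<le> \<bar>e-b\<bar> + \<bar>s-c\<bar>"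
    using sqrt_sum_squares_le_sum_abs by simp
  finally show ?thesis by simp
qed

lemma box: "\<exists>r>0. r < 1 \<and> (\<forall>m e s. \<bar>m-6\<bar> \<le> r \<longrightarrow> \<bar>e\<bar> \<le> r \<longrightarrow> \<bar>s-3\<bar> \<le> r \<longrightarrow> gmin m e s > 0)"
proof -
  let ?g = "\<lambda>x. gmin (fst x) (fst (snd x)) (snd (snd x))"
  let ?p = "(6::real, (0::real, 3::real))"
  have pos: "?g ?p > 0" by (simp add: gmin_def base_vals)
  obtain d where d: "d > 0" "\<And>x'. dist x' ?p < d \<Longrightarrow> dist (?g x') (?g ?p) < ?g ?p"
    using cont_gmin[of ?p, unfolded continuous_at_eps_delta] pos by meson
  define r where "r = min (d/4) (1/2)"
  have "r > 0" "r < 1" using d(1) by (auto simp: r_def)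
  moreover have "gmin m e s > 0" if "\<bar>m-6\<bar> \<le> r" "\<bar>e\<bar> \<le> r" "\<bar>s-3\<bar> \<le> r" for m e s
  proof -
    have "dist (m,(e,s)) ?p \<le> \<bar>m-6\<bar> + \<bar>e-0\<bar> + \<bar>s-3\<bar>" by (rule dist3)
    also have "\<dots> < d" using that d(1) unfolding r_def by auto
    finally have "dist (?g (m,(e,s))) (?g ?p) < ?g ?p" using d(2) by blast
    then show ?thesis by (simp add: dist_real_def abs_less_iff)
  qed
  ultimately show ?thesis by blast
qed

definition r0 :: real where
  "r0 = (SOME r. r>0 \<and> r < 1 \<and> (\<forall>m e s. \<bar>m-6\<bar> \<le> r \<longrightarrow> \<bar>e\<bar> \<le> r \<longrightarrow> \<bar>s-3\<bar> \<le> r \<longrightarrow> gmin m e s > 0))"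

lemma r0: "r0 > 0" "r0 < 1" "\<And>m e s. \<bar>m-6\<bar> \<le> r0 \<Longrightarrow> \<bar>e\<bar> \<le> r0 \<Longrightarrow> \<bar>s-3\<bar> \<le> r0 \<Longrightarrow> gmin m e s > 0"
  using someI_ex[OF box] unfolding r0_def[symmetric] by blast+

lemma inbox:
  assumes "\<bar>m-6\<bar> \<le> r0" "\<bar>e\<bar> \<le> r0" "\<bar>s-3\<bar> \<le> r0"
  shows "DRm m e s > 0" "DRs m e s < 0" "DIm m e s < 0" "DIs m e s < 0" "a4 m e > 0" "B2 m e > 0"
  using r0(3)[OF assms] unfolding gmin_def by auto

lemma mono_Rm:
  assumes "6 - r0 \<le> m1" "m1 < m2" "m2 \<le> 6 + r0" "\<bar>e\<bar> \<le> r0" "\<bar>s-3\<bar> \<le> r0"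
  shows "RR m1 e s < RR m2 e s"
  using assms by (intro DERIV_pos_imp_increasing[where f="\<lambda>m. RR m e s"]) (auto intro!: dRm inbox)

lemma mono_Im:
  assumes "6 - r0 \<le> m1" "m1 < m2" "m2 \<le> 6 + r0" "\<bar>e\<bar> \<le> r0" "\<bar>s-3\<bar> \<le> r0"
  shows "II m1 e s > II m2 e s"
  using assms by (intro DERIV_neg_imp_decreasing[where f="\<lambda>m. II m e s"]) (auto intro!: dIm inbox)

lemma mono_Rs:
  assumes "3 - r0 \<le> s1" "s1 < s2" "s2 \<le> 3 + r0" "\<bar>e\<bar> \<le> r0" "\<bar>m-6\<bar> \<le> r0"
  shows "RR m e s1 > RR m e s2"
  using assms by (intro DERIV_neg_imp_decreasing[where f="\<lambda>s. RR m e s"]) (auto intro!: dRs inbox)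

lemma mono_Is:
  assumes "0 \<le> s1" "s1 < s2" "0 \<le> e" "e \<le> r0" "\<bar>m-6\<bar> \<le> r0"
  shows "II m e s1 > II m e s2"
proof -
  have a4: "a4 m e > 0" and b2: "B2 m e > 0" using inbox[of m e 3] assms by auto
  have "e * e \<le> e * 1" using assms r0(2) by (intro mult_left_mono) auto
  hence "e^2 - e \<le> 0" by (simp add: power2_eq_square)
  hence a2: "a2 m e \<le> 0" using b2 by (simp add: a2_B2 mult_nonpos_nonneg)
  have a0: "a0 m e \<ge> 0" by (rule a0_nonneg)
  have "s1^2 \<le> s2^2" using assms by (simp add: power_mono)
  hence t2: "a2 m e * s1^2 \<ge> a2 m e * s2^2" using a2 by (simp add: mult_left_mono_neg)
  have "s1^3 \<le> s2^3" using assms by (simp add: power_mono)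
  hence t3: "a0 m e * s1^3 \<le> a0 m e * s2^3" using a0 by (simp add: mult_left_mono)
  have t1: "a4 m e * s1 < a4 m e * s2" using a4 assms by simp
  show ?thesis unfolding II_def using t1 t2 t3 by linarith
qed

lemma tendsto_RR:
  assumes "(fm \<longlongrightarrow> a) F" "(fe \<longlongrightarrow> b) F" "(fs \<longlongrightarrow> c) F"
  shows "((\<lambda>x. RR (fm x) (fe x) (fs x)) \<longlongrightarrow> RR a b c) F"
  unfolding RR_def a1_def a3_def a5_def a7_def
  by (intro tendsto_intros assms)

lemma tendsto_II:
  assumes "(fm \<longlongrightarrow> a) F" "(fe \<longlongrightarrow> b) F" "(fs \<longlongrightarrow> c) F"
  shows "((\<lambda>x. II (fm x) (fe x) (fs x)) \<longlongrightarrow> II a b c) F"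
  unfolding II_def a0_def a2_def a4_def a6_def
  by (intro tendsto_intros assms)

lemma poly_P7:
  "poly (P7 m e) (\<i> * complex_of_real y) = complex_of_real (RR m e (y^2)) + \<i> * complex_of_real (y * II m e (y^2))"
  unfolding P7_def RR_def II_def
  by (simp add: map_poly_pCons complex_eq_iff power2_eq_square power3_eq_cube algebra_simps)

definition sI :: "real \<Rightarrow> real \<Rightarrow> real" where
  "sI m e = (THE s. 0 < s \<and> II m e s = 0)"

lemma cont_II_s: "continuous_on S (\<lambda>s. II m e s)"
  unfolding II_def by (intro continuous_intros)

locale setting =
  fixes \<delta> e :: real
  assumes dpos: "0 < \<delta>" and dle: "\<delta> \<le> r0/2" and epos: "0 < e" and ele: "e \<le> r0"
    and hI1: "II (6+\<delta>) e (3-r0) > 0" and hI2: "II (6-\<delta>) e (3+r0) < 0"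
begin

lemma Ipos: assumes "\<bar>m-6\<bar> \<le> \<delta>" shows "II m e (3-r0) > 0"
proof (cases "m = 6+\<delta>")
  case True then show ?thesis using hI1 by simp
next
  case False
  then have "II m e (3-r0) > II (6+\<delta>) e (3-r0)"
    using assms dle ele epos r0 by (intro mono_Im) auto
  then show ?thesis using hI1 by linarith
qed

lemma Ineg: assumes "\<bar>m-6\<bar> \<le> \<delta>" shows "II m e (3+r0) < 0"
proof (cases "m = 6-\<delta>")
  case True then show ?thesis using hI2 by simp
next
  case False
  then have "II m e (3+r0) < II (6-\<delta>) e (3+r0)"
    using assms dle ele epos r0 by (intro mono_Im) auto
  then show ?thesis using hI2 by linarith
qed

lemma Idec: assumes "\<bar>m-6\<bar> \<le> \<delta>" "0 \<le> s1" "s1 < s2" shows "II m e s1 > II m e s2"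
  using assms dle ele epos by (intro mono_Is) auto

lemma root_loc: assumes "\<bar>m-6\<bar> \<le> \<delta>" "0 < s" "II m e s = 0" shows "3 - r0 < s" "s < 3 + r0"
proof -
  show "3 - r0 < s"
  proof (rule ccontr)
    assume "\<not> 3 - r0 < s"
    then have "s = 3 - r0 \<or> s < 3 - r0" by auto
    then show False
    proof
      assume "s = 3 - r0" then show False using Ipos[OF assms(1)] assms by simp
    next
      assume "s < 3 - r0" then have "II m e s > II m e (3-r0)" using assms by (intro Idec) auto
      then show False using Ipos[OF assms(1)] assms by simp
    qed
  qed
  show "s < 3 + r0"
  proof (rule ccontr)
    assume "\<not> s < 3 + r0"
    then have "s = 3 + r0 \<or> s > 3 + r0" by auto
    then show False
    proof
      assume "s = 3 + r0" then show False using Ineg[OF assms(1)] assms by simp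
    next
      assume "s > 3 + r0" then have "II m e s < II m e (3+r0)" using assms r0 by (intro Idec) auto
      then show False using Ineg[OF assms(1)] assms by simp
    qed
  qed
qed

lemma root_uniq: assumes "\<bar>m-6\<bar> \<le> \<delta>" "0 < s1" "0 < s2" "II m e s1 = 0" "II m e s2 = 0" shows "s1 = s2"
proof (rule ccontr)
  assume "s1 \<noteq> s2"
  then have "s1 < s2 \<or> s2 < s1" by auto
  then show False
  proof
    assume "s1 < s2" then show False using Idec[OF assms(1), of s1 s2] assms by simp
  next
    assume "s2 < s1" then show False using Idec[OF assms(1), of s2 s1] assms by simp
  qed
qed

lemma root_ex: assumes "\<bar>m-6\<bar> \<le> \<delta>" shows "\<exists>s. 0 < s \<and> II m e s = 0"
proof -
  have "\<exists>s. 3 - r0 \<le> s \<and> s \<le> 3 + r0 \<and> II m e s = 0"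
    using Ipos[OF assms] Ineg[OF assms] r0 by (intro IVT2' cont_II_s) auto
  then show ?thesis using r0 by (metis add_le_same_cancel2 diff_gt_0_iff_gt less_trans linorder_not_less numeral_less_iff one_less_numeral_iff semiring_norm(77) le_less_trans order.strict_trans1)
qed

lemma sI: assumes "\<bar>m-6\<bar> \<le> \<delta>" shows "0 < sI m e" "II m e (sI m e) = 0" "3 - r0 < sI m e" "sI m e < 3 + r0"
proof -
  have ex: "\<exists>!s. 0 < s \<and> II m e s = 0" using root_ex[OF assms] root_uniq[OF assms] by blast
  have "0 < sI m e \<and> II m e (sI m e) = 0" unfolding sI_def by (rule theI'[OF ex])
  then show "0 < sI m e" "II m e (sI m e) = 0" by auto
  then show "3 - r0 < sI m e" "sI m e < 3 + r0" using root_loc[OF assms] by auto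
qed

lemma sI_eq: assumes "\<bar>m-6\<bar> \<le> \<delta>" "0 < s" "II m e s = 0" shows "sI m e = s"
  using root_uniq[OF assms(1) sI(1)[OF assms(1)] assms(2) sI(2)[OF assms(1)] assms(3)] .

end

context setting
begin

lemma sI_cont: assumes m0: "m0 \<in> {6-\<delta>..6+\<delta>}"
  shows "((\<lambda>m. sI m e) \<longlongrightarrow> sI m0 e) (at m0 within {6-\<delta>..6+\<delta>})"
proof (rule order_tendstoI)
  let ?S = "{6-\<delta>..6+\<delta>}"
  have inS: "eventually (\<lambda>m. m \<in> ?S) (at m0 within ?S)" by (simp add: eventually_at_filter)
  have m0': "\<bar>m0 - 6\<bar> \<le> \<delta>" using m0 by auto
  fix a assume a: "a < sI m0 e"
  define a' where "a' = max a (sI m0 e / 2)"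
  have a'0: "0 \<le> a'" "a' < sI m0 e" using a sI(1)[OF m0'] by (auto simp: a'_def)
  have "II m0 e a' > II m0 e (sI m0 e)" by (rule Idec[OF m0' a'0])
  then have pos: "II m0 e a' > 0" using sI(2)[OF m0'] by simp
  have "((\<lambda>m. II m e a') \<longlongrightarrow> II m0 e a') (at m0 within ?S)"
    by (intro tendsto_II tendsto_ident_at tendsto_const)
  then have "eventually (\<lambda>m. II m e a' > 0) (at m0 within ?S)"
    using pos by (rule order_tendstoD)
  then show "eventually (\<lambda>m. a < sI m e) (at m0 within ?S)"
    using inS
  proof eventually_elim
    case (elim m)
    then have m: "\<bar>m - 6\<bar> \<le> \<delta>" by auto
    show ?case
    proof (rule ccontr)
      assume "\<not> a < sI m e"
      then have "sI m e \<le> a'" by (auto simp: a'_def)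
      then have "sI m e = a' \<or> sI m e < a'" by auto
      then have "II m e (sI m e) > 0"
      proof
        assume "sI m e < a'" then have "II m e (sI m e) > II m e a'" using sI(1)[OF m] by (intro Idec[OF m]) auto
        then show ?thesis using elim by simp
      qed (use elim in simp)
      then show False using sI(2)[OF m] by simp
    qed
  qed
next
  let ?S = "{6-\<delta>..6+\<delta>}"
  have inS: "eventually (\<lambda>m. m \<in> ?S) (at m0 within ?S)" by (simp add: eventually_at_filter)
  have m0': "\<bar>m0 - 6\<bar> \<le> \<delta>" using m0 by auto
  fix a assume a: "a > sI m0 e"
  have "II m0 e a < II m0 e (sI m0 e)" using sI(1)[OF m0'] a by (intro Idec[OF m0']) auto
  then have neg: "II m0 e a < 0" using sI(2)[OF m0'] by simp
  have "((\<lambda>m. II m e a) \<longlongrightarrow> II m0 e a) (at m0 within ?S)"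
    by (intro tendsto_II tendsto_ident_at tendsto_const)
  then have "eventually (\<lambda>m. II m e a < 0) (at m0 within ?S)"
    using neg by (rule order_tendstoD)
  then show "eventually (\<lambda>m. sI m e < a) (at m0 within ?S)"
    using inS
  proof eventually_elim
    case (elim m)
    then have m: "\<bar>m - 6\<bar> \<le> \<delta>" by auto
    show ?case
    proof (rule ccontr)
      assume "\<not> sI m e < a"
      then have "sI m e = a \<or> a < sI m e" by auto
      then have "II m e (sI m e) < 0"
      proof
        assume "a < sI m e" then have "II m e (sI m e) < II m e a" using sI(1)[OF m] a sI(1)[OF m0'] by (intro Idec[OF m]) auto
        then show ?thesis using elim by simp
      qed (use elim in simp)
      then show False using sI(2)[OF m] by simp
    qed
  qed
qed

lemma D_cont: "continuous_on {6-\<delta>..6+\<delta>} (\<lambda>m. RR m e (sI m e))"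
  unfolding continuous_on_eq_continuous_within continuous_within
  by (auto intro!: tendsto_RR tendsto_ident_at tendsto_const sI_cont)

lemma common_ex:
  assumes ab: "6-\<delta> \<le> a" "a < b" "b \<le> 6+\<delta>"
    and sa: "II a e 3 > 0" "RR a e 3 < 0" and sb: "II b e 3 < 0" "RR b e 3 > 0"
  shows "\<exists>m. a < m \<and> m < b \<and> RR m e (sI m e) = 0"
proof -
  have ma: "\<bar>a-6\<bar> \<le> \<delta>" and mb: "\<bar>b-6\<bar> \<le> \<delta>" using ab by auto
  have boxa: "\<bar>a-6\<bar> \<le> r0" and boxb: "\<bar>b-6\<bar> \<le> r0" and eb: "\<bar>e\<bar> \<le> r0" using ma mb dle epos ele r0 by auto
  have "sI a e > 3"
  proof (rule ccontr)
    assume "\<not> sI a e > 3"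
    then have "sI a e = 3 \<or> sI a e < 3" by auto
    then have "II a e (sI a e) > 0"
    proof
      assume "sI a e < 3" then show ?thesis using Idec[OF ma, of "sI a e" 3] sI(1)[OF ma] sa by simp
    qed (use sa in simp)
    then show False using sI(2)[OF ma] by simp
  qed
  then have "RR a e (sI a e) < RR a e 3" using sI(4)[OF ma] boxa eb r0 by (intro mono_Rs) auto
  then have Da: "RR a e (sI a e) < 0" using sa by simp
  have "sI b e < 3"
  proof (rule ccontr)
    assume "\<not> sI b e < 3"
    then have "sI b e = 3 \<or> sI b e > 3" by auto
    then have "II b e (sI b e) < 0"
    proof
      assume "sI b e > 3" then show ?thesis using Idec[OF mb, of 3 "sI b e"] sb by simp
    qed (use sb in simp)
    then show False using sI(2)[OF mb] by simp
  qed
  then have "RR b e (sI b e) > RR b e 3" using sI(3)[OF mb] boxb eb r0 by (intro mono_Rs) auto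
  then have Db: "RR b e (sI b e) > 0" using sb by simp
  have "continuous_on {a..b} (\<lambda>m. RR m e (sI m e))"
    using D_cont by (rule continuous_on_subset) (use ab in auto)
  then obtain m where m: "a \<le> m" "m \<le> b" "RR m e (sI m e) = 0"
    using IVT'[of "\<lambda>m. RR m e (sI m e)" a 0 b] Da Db ab by auto
  moreover have "m \<noteq> a" "m \<noteq> b" using m Da Db by auto
  ultimately show ?thesis by (intro exI[of _ m]) auto
qed

lemma common_uniq:
  assumes m1: "\<bar>m1-6\<bar> \<le> \<delta>" and m2: "\<bar>m2-6\<bar> \<le> \<delta>"
    and s1: "0 < s1" "II m1 e s1 = 0" "RR m1 e s1 = 0"
    and s2: "0 < s2" "II m2 e s2 = 0" "RR m2 e s2 = 0"
  shows "m1 = m2"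
proof -
  have key: False if "\<bar>x1-6\<bar> \<le> \<delta>" "\<bar>x2-6\<bar> \<le> \<delta>" "x1 < x2"
    "0 < t1" "II x1 e t1 = 0" "RR x1 e t1 = 0" "0 < t2" "II x2 e t2 = 0" "RR x2 e t2 = 0" for x1 x2 t1 t2
  proof -
    have t1b: "3 - r0 < t1" "t1 < 3 + r0" using root_loc[OF that(1) that(4,5)] by auto
    have t2b: "3 - r0 < t2" "t2 < 3 + r0" using root_loc[OF that(2) that(7,8)] by auto
    have eb: "\<bar>e\<bar> \<le> r0" using epos ele by auto
    have x: "6 - r0 \<le> x1" "x2 \<le> 6 + r0" "\<bar>x1-6\<bar> \<le> r0" "\<bar>x2-6\<bar> \<le> r0" using that(1,2) dle r0 by auto
    have "II x2 e t1 < II x1 e t1" using x that(3) eb t1b by (intro mono_Im) auto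
    then have "II x2 e t1 < II x2 e t2" using that by simp
    then have A: "t2 < t1"
      using Idec[OF that(2), of t1 t2] Idec[OF that(2), of t2 t1] that by (cases "t1 < t2"; cases "t1 = t2") auto
    have "RR x1 e t1 < RR x2 e t1" using x that(3) eb t1b by (intro mono_Rm) auto
    then have "RR x2 e t2 < RR x2 e t1" using that by simp
    moreover have "RR x2 e t1 < RR x2 e t2" using A t1b t2b x eb by (intro mono_Rs) auto
    ultimately show False by simp
  qed
  show ?thesis
  proof (rule ccontr)
    assume "m1 \<noteq> m2"
    then have "m1 < m2 \<or> m2 < m1" by auto
    then show False
    proof
      assume "m1 < m2" then show False using key[OF m1 m2 _ s1 s2] by simp
    next
      assume "m2 < m1" then show False using key[OF m2 m1 _ s2 s1] by simp
    qed
  qed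
qed

end

context setting begin
lemma uip_iff:
  assumes m: "\<bar>m-6\<bar> \<le> \<delta>"
  shows "unique_imag_pair (P7 m e) w \<longleftrightarrow> (w > 0 \<and> II m e (w^2) = 0 \<and> RR m e (w^2) = 0)"
proof -
  have root: "poly (P7 m e) (\<i> * complex_of_real y) = 0 \<longleftrightarrow> RR m e (y^2) = 0 \<and> (y = 0 \<or> II m e (y^2) = 0)" for y
    by (simp add: poly_P7 complex_eq_iff)
  have z: "z = \<i> * complex_of_real (Im z)" if "Re z = 0" for z
    using that by (simp add: complex_eq_iff)
  show ?thesis
  proof
    assume u: "unique_imag_pair (P7 m e) w"
    have w: "w > 0" using u[unfolded unique_imag_pair_def] by (rule conjunct1)
    have S: "{z. poly (P7 m e) z = 0 \<and> Re z = 0 \<and> Im z \<noteq> 0} = {\<i> * of_real w, - \<i> * of_real w}"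
      using u[unfolded unique_imag_pair_def] by (rule conjunct2)
    have "\<i> * complex_of_real w \<in> {z. poly (P7 m e) z = 0 \<and> Re z = 0 \<and> Im z \<noteq> 0}" by (subst S) simp
    then have "poly (P7 m e) (\<i> * complex_of_real w) = 0" by simp
    then show "w > 0 \<and> II m e (w^2) = 0 \<and> RR m e (w^2) = 0" using root[of w] w by simp
  next
    assume h: "w > 0 \<and> II m e (w^2) = 0 \<and> RR m e (w^2) = 0"
    have "{z. poly (P7 m e) z = 0 \<and> Re z = 0 \<and> Im z \<noteq> 0} = {\<i> * of_real w, - \<i> * of_real w}"
    proof (intro equalityI subsetI)
      fix z assume "z \<in> {z. poly (P7 m e) z = 0 \<and> Re z = 0 \<and> Im z \<noteq> 0}"
      then have zz: "poly (P7 m e) z = 0" "Re z = 0" "Im z \<noteq> 0" by simp_all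
      define y where "y = Im z"
      have zy: "z = \<i> * complex_of_real y" using z[OF zz(2)] by (simp add: y_def)
      have y0: "y \<noteq> 0" using zz(3) by (simp add: y_def)
      have "poly (P7 m e) (\<i> * complex_of_real y) = 0" using zz(1) zy by simp
      then have yy: "RR m e (y^2) = 0" "II m e (y^2) = 0" using root[of y] y0 by simp_all
      moreover have "0 < y^2" using y0 by simp
      ultimately have "y^2 = w^2" using root_uniq[OF m, of "y^2" "w^2"] h by simp
      then have "y = w \<or> y = -w" by (simp add: power2_eq_iff)
      then show "z \<in> {\<i> * of_real w, - \<i> * of_real w}" using zy by auto
    next
      fix z assume "z \<in> {\<i> * complex_of_real w, - \<i> * complex_of_real w}"
      then have zw: "z = \<i> * complex_of_real w \<or> z = \<i> * complex_of_real (-w)" by auto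
      have p1: "poly (P7 m e) (\<i> * complex_of_real w) = 0" using root[of w] h by simp
      have p2: "poly (P7 m e) (\<i> * complex_of_real (-w)) = 0" using root[of "-w"] h by simp
      show "z \<in> {z. poly (P7 m e) z = 0 \<and> Re z = 0 \<and> Im z \<noteq> 0}"
        using zw
      proof
        assume "z = \<i> * complex_of_real w" then show ?thesis using p1 h by simp
      next
        assume "z = \<i> * complex_of_real (-w)" then show ?thesis using p2 h by simp
      qed
    qed
    then show "unique_imag_pair (P7 m e) w" unfolding unique_imag_pair_def using h by blast
  qed
qed
end

context setting begin
lemma sI_gt: assumes m: "\<bar>m-6\<bar> \<le> \<delta>" and a: "0 \<le> a" "II m e a > 0" shows "a < sI m e"
proof (rule ccontr)
  assume "\<not> a < sI m e"
  then have "sI m e = a \<or> sI m e < a" by auto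
  then have "II m e (sI m e) > 0"
  proof
    assume "sI m e < a" then have "II m e (sI m e) > II m e a" using sI(1)[OF m] by (intro Idec[OF m]) auto
    then show ?thesis using a by simp
  qed (use a in simp)
  then show False using sI(2)[OF m] by simp
qed

lemma sI_lt: assumes m: "\<bar>m-6\<bar> \<le> \<delta>" and b: "0 \<le> b" "II m e b < 0" shows "sI m e < b"
proof (rule ccontr)
  assume "\<not> sI m e < b"
  then have "sI m e = b \<or> b < sI m e" by auto
  then have "II m e (sI m e) < 0"
  proof
    assume "b < sI m e" then have "II m e (sI m e) < II m e b" using b by (intro Idec[OF m]) auto
    then show ?thesis using b by simp
  qed (use b in simp)
  then show False using sI(2)[OF m] by simp
qed
end

lemma signs0:
  assumes "0 < d" "d \<le> r0"
  shows "II (6-d) 0 3 > 0" "RR (6-d) 0 3 < 0" "II (6+d) 0 3 < 0" "RR (6+d) 0 3 > 0"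
proof -
  have "II (6-d) 0 3 > II 6 0 3" using assms r0 by (intro mono_Im) auto
  then show "II (6-d) 0 3 > 0" by (simp add: base_vals)
  have "RR (6-d) 0 3 < RR 6 0 3" using assms r0 by (intro mono_Rm) auto
  then show "RR (6-d) 0 3 < 0" by (simp add: base_vals)
  have "II 6 0 3 > II (6+d) 0 3" using assms r0 by (intro mono_Im) auto
  then show "II (6+d) 0 3 < 0" by (simp add: base_vals)
  have "RR 6 0 3 < RR (6+d) 0 3" using assms r0 by (intro mono_Rm) auto
  then show "RR (6+d) 0 3 > 0" by (simp add: base_vals)
qed

lemma ev_signs:
  assumes "0 < d" "d \<le> r0"
  shows "eventually (\<lambda>e. II (6-d) e 3 > 0 \<and> RR (6-d) e 3 < 0 \<and> II (6+d) e 3 < 0 \<and> RR (6+d) e 3 > 0) (at_right 0)"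
proof -
  have id: "((\<lambda>e::real. e) \<longlongrightarrow> 0) (at_right 0)" by (rule tendsto_ident_at)
  note s = signs0[OF assms]
  have "eventually (\<lambda>e. II (6-d) e 3 > 0) (at_right 0)"
    by (rule order_tendstoD(1)[OF tendsto_II[OF tendsto_const id tendsto_const] s(1)])
  moreover have "eventually (\<lambda>e. RR (6-d) e 3 < 0) (at_right 0)"
    by (rule order_tendstoD(2)[OF tendsto_RR[OF tendsto_const id tendsto_const] s(2)])
  moreover have "eventually (\<lambda>e. II (6+d) e 3 < 0) (at_right 0)"
    by (rule order_tendstoD(2)[OF tendsto_II[OF tendsto_const id tendsto_const] s(3)])
  moreover have "eventually (\<lambda>e. RR (6+d) e 3 > 0) (at_right 0)"
    by (rule order_tendstoD(1)[OF tendsto_RR[OF tendsto_const id tendsto_const] s(4)])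
  ultimately show ?thesis by eventually_elim auto
qed

lemma choose_delta: "\<exists>\<delta>. 0 < \<delta> \<and> \<delta> \<le> r0/2 \<and> II (6+\<delta>) 0 (3-r0) > 0 \<and> II (6-\<delta>) 0 (3+r0) < 0"
proof -
  have p1: "II 6 0 (3-r0) > 0"
  proof -
    have "II 6 0 (3-r0) > II 6 0 3" using r0 by (intro mono_Is) auto
    then show ?thesis by (simp add: base_vals)
  qed
  have p2: "II 6 0 (3+r0) < 0"
  proof -
    have "II 6 0 3 > II 6 0 (3+r0)" using r0 by (intro mono_Is) auto
    then show ?thesis by (simp add: base_vals)
  qed
  have l1: "((\<lambda>d::real. 6 + d) \<longlongrightarrow> 6) (at_right 0)"
    using tendsto_add[OF tendsto_const[of 6] tendsto_ident_at[of 0 "{0<..}"]] by simp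
  have l2: "((\<lambda>d::real. 6 - d) \<longlongrightarrow> 6) (at_right 0)"
    using tendsto_diff[OF tendsto_const[of 6] tendsto_ident_at[of 0 "{0<..}"]] by simp
  have "eventually (\<lambda>d. II (6+d) 0 (3-r0) > 0) (at_right 0)"
    by (rule order_tendstoD(1)[OF tendsto_II[OF l1 tendsto_const tendsto_const] p1])
  moreover have "eventually (\<lambda>d. II (6-d) 0 (3+r0) < 0) (at_right 0)"
    by (rule order_tendstoD(2)[OF tendsto_II[OF l2 tendsto_const tendsto_const] p2])
  ultimately have "eventually (\<lambda>d. II (6+d) 0 (3-r0) > 0 \<and> II (6-d) 0 (3+r0) < 0) (at_right 0)"
    by eventually_elim auto
  then obtain b where b: "b > 0" "\<And>d. d > 0 \<Longrightarrow> d < b \<Longrightarrow> II (6+d) 0 (3-r0) > 0 \<and> II (6-d) 0 (3+r0) < 0"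
    unfolding eventually_at_right_field by auto
  define \<delta> where "\<delta> = min (b/2) (r0/2)"
  have "0 < \<delta>" "\<delta> < b" "\<delta> \<le> r0/2" using b r0 by (auto simp: \<delta>_def)
  then show ?thesis using b(2)[of \<delta>] by blast
qed

lemma choose_eps:
  assumes "0 < \<delta>" "\<delta> \<le> r0/2" "II (6+\<delta>) 0 (3-r0) > 0" "II (6-\<delta>) 0 (3+r0) < 0"
  shows "\<exists>eps0 > 0. \<forall>e. 0 < e \<longrightarrow> e < eps0 \<longrightarrow> setting \<delta> e \<and>
     II (6-\<delta>) e 3 > 0 \<and> RR (6-\<delta>) e 3 < 0 \<and> II (6+\<delta>) e 3 < 0 \<and> RR (6+\<delta>) e 3 > 0"
proof -
  have id: "((\<lambda>e::real. e) \<longlongrightarrow> 0) (at_right 0)" by (rule tendsto_ident_at)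
  have "eventually (\<lambda>e. II (6+\<delta>) e (3-r0) > 0) (at_right 0)"
    by (rule order_tendstoD(1)[OF tendsto_II[OF tendsto_const id tendsto_const] assms(3)])
  moreover have "eventually (\<lambda>e. II (6-\<delta>) e (3+r0) < 0) (at_right 0)"
    by (rule order_tendstoD(2)[OF tendsto_II[OF tendsto_const id tendsto_const] assms(4)])
  moreover have "eventually (\<lambda>e. II (6-\<delta>) e 3 > 0 \<and> RR (6-\<delta>) e 3 < 0 \<and> II (6+\<delta>) e 3 < 0 \<and> RR (6+\<delta>) e 3 > 0) (at_right 0)"
    using assms r0 by (intro ev_signs) auto
  ultimately have "eventually (\<lambda>e. II (6+\<delta>) e (3-r0) > 0 \<and> II (6-\<delta>) e (3+r0) < 0 \<and>
      II (6-\<delta>) e 3 > 0 \<and> RR (6-\<delta>) e 3 < 0 \<and> II (6+\<delta>) e 3 < 0 \<and> RR (6+\<delta>) e 3 > 0) (at_right 0)"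
    by eventually_elim auto
  then obtain b where b: "b > 0" "\<And>e. e > 0 \<Longrightarrow> e < b \<Longrightarrow> II (6+\<delta>) e (3-r0) > 0 \<and> II (6-\<delta>) e (3+r0) < 0 \<and>
      II (6-\<delta>) e 3 > 0 \<and> RR (6-\<delta>) e 3 < 0 \<and> II (6+\<delta>) e 3 < 0 \<and> RR (6+\<delta>) e 3 > 0"
    unfolding eventually_at_right_field by auto
  define eps0 where "eps0 = min b r0"
  have "eps0 > 0" using b r0 by (auto simp: eps0_def)
  moreover have "setting \<delta> e \<and> II (6-\<delta>) e 3 > 0 \<and> RR (6-\<delta>) e 3 < 0 \<and> II (6+\<delta>) e 3 < 0 \<and> RR (6+\<delta>) e 3 > 0"
    if "0 < e" "e < eps0" for e
  proof -
    have "e < b" "e \<le> r0" using that by (auto simp: eps0_def)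
    then show ?thesis using b(2)[of e] that assms unfolding setting_def by auto
  qed
  ultimately show ?thesis by blast
qed

theorem proposition5p1:
  shows "\<exists>eps0 > 0. \<exists>\<delta> > 0. \<exists>mc :: real \<Rightarrow> real. \<exists>\<omega> :: real \<Rightarrow> real.
    (\<forall>e \<in> {0<..<eps0}. mc e \<in> {6 - \<delta><..<6 + \<delta>}) \<and>
    (mc \<longlongrightarrow> 6) (at_right 0) \<and>
    (\<forall>e \<in> {0<..<eps0}. unique_imag_pair (P7 (mc e) e) (\<omega> e)) \<and>
    (\<forall>mc' :: real \<Rightarrow> real.
       ((\<forall>e \<in> {0<..<eps0}. mc' e \<in> {6 - \<delta><..<6 + \<delta>}) \<and>
        (mc' \<longlongrightarrow> 6) (at_right 0) \<and>
        (\<forall>e \<in> {0<..<eps0}. \<exists>w. unique_imag_pair (P7 (mc' e) e) w))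
       \<longrightarrow> (\<forall>e \<in> {0<..<eps0}. mc' e = mc e)) \<and>
    (\<omega> \<longlongrightarrow> sqrt 3) (at_right 0)"
proof -
  obtain \<delta> where d: "0 < \<delta>" "\<delta> \<le> r0/2" "II (6+\<delta>) 0 (3-r0) > 0" "II (6-\<delta>) 0 (3+r0) < 0"
    using choose_delta by blast
  obtain eps0 where eps0: "eps0 > 0" and H: "\<And>e. 0 < e \<Longrightarrow> e < eps0 \<Longrightarrow> setting \<delta> e \<and>
     II (6-\<delta>) e 3 > 0 \<and> RR (6-\<delta>) e 3 < 0 \<and> II (6+\<delta>) e 3 < 0 \<and> RR (6+\<delta>) e 3 > 0"
    using choose_eps[OF d] by blast
  define mc where "mc e = (SOME m. 6-\<delta> < m \<and> m < 6+\<delta> \<and> RR m e (sI m e) = 0)" for e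
  define \<omega> where "\<omega> e = sqrt (sI (mc e) e)" for e
  have mc: "6-\<delta> < mc e \<and> mc e < 6+\<delta> \<and> RR (mc e) e (sI (mc e) e) = 0" if "0 < e" "e < eps0" for e
  proof -
    interpret setting \<delta> e using H[OF that] by blast
    have "\<exists>m. 6-\<delta> < m \<and> m < 6+\<delta> \<and> RR m e (sI m e) = 0"
      using H[OF that] d by (intro common_ex) auto
    then show ?thesis unfolding mc_def by (rule someI_ex)
  qed
  have mcabs: "\<bar>mc e - 6\<bar> \<le> \<delta>" if "0 < e" "e < eps0" for e using mc[OF that] by auto
  have P1: "\<forall>e \<in> {0<..<eps0}. mc e \<in> {6 - \<delta><..<6 + \<delta>}" using mc by auto
  have P3: "\<forall>e \<in> {0<..<eps0}. unique_imag_pair (P7 (mc e) e) (\<omega> e)"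
  proof
    fix e assume "e \<in> {0<..<eps0}"
    then have e: "0 < e" "e < eps0" by auto
    interpret setting \<delta> e using H[OF e] by blast
    have s: "0 < sI (mc e) e" "II (mc e) e (sI (mc e) e) = 0" using sI[OF mcabs[OF e]] by auto
    have w2: "(\<omega> e)^2 = sI (mc e) e" using s(1) by (simp add: \<omega>_def)
    have "\<omega> e > 0" using s(1) by (simp add: \<omega>_def)
    then show "unique_imag_pair (P7 (mc e) e) (\<omega> e)"
      using uip_iff[OF mcabs[OF e]] w2 s mc[OF e] by simp
  qed
  have P4: "\<forall>mc' :: real \<Rightarrow> real.
       ((\<forall>e \<in> {0<..<eps0}. mc' e \<in> {6 - \<delta><..<6 + \<delta>}) \<and>
        (mc' \<longlongrightarrow> 6) (at_right 0) \<and>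
        (\<forall>e \<in> {0<..<eps0}. \<exists>w. unique_imag_pair (P7 (mc' e) e) w))
       \<longrightarrow> (\<forall>e \<in> {0<..<eps0}. mc' e = mc e)"
  proof (intro allI impI ballI)
    fix mc' :: "real \<Rightarrow> real" and e
    assume A: "(\<forall>e \<in> {0<..<eps0}. mc' e \<in> {6 - \<delta><..<6 + \<delta>}) \<and>
        (mc' \<longlongrightarrow> 6) (at_right 0) \<and>
        (\<forall>e \<in> {0<..<eps0}. \<exists>w. unique_imag_pair (P7 (mc' e) e) w)"
    assume "e \<in> {0<..<eps0}"
    then have e: "0 < e" "e < eps0" by auto
    interpret setting \<delta> e using H[OF e] by blast
    have m': "\<bar>mc' e - 6\<bar> \<le> \<delta>" using A e by force
    obtain w where "unique_imag_pair (P7 (mc' e) e) w" using A e by force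
    then have w: "w > 0" "II (mc' e) e (w^2) = 0" "RR (mc' e) e (w^2) = 0" using uip_iff[OF m'] by auto
    have s: "0 < sI (mc e) e" "II (mc e) e (sI (mc e) e) = 0" using sI[OF mcabs[OF e]] by auto
    show "mc' e = mc e"
      using common_uniq[OF m' mcabs[OF e], of "w^2" "sI (mc e) e"] w s mc[OF e] by simp
  qed
  have evE: "eventually (\<lambda>e. 0 < e \<and> e < eps0) (at_right 0)"
    unfolding eventually_at_right_field using eps0 by blast
  have P2: "(mc \<longlongrightarrow> 6) (at_right 0)"
  proof (rule tendstoI)
    fix \<epsilon> :: real assume \<epsilon>: "\<epsilon> > 0"
    define d where "d = min (\<epsilon>/2) (\<delta>/2)"
    have d0: "0 < d" "d < \<epsilon>" "d < \<delta>" "d \<le> r0" using \<epsilon> d by (auto simp: d_def)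
    have "eventually (\<lambda>e. II (6-d) e 3 > 0 \<and> RR (6-d) e 3 < 0 \<and> II (6+d) e 3 < 0 \<and> RR (6+d) e 3 > 0) (at_right 0)"
      using d0 by (intro ev_signs) auto
    then show "eventually (\<lambda>e. dist (mc e) 6 < \<epsilon>) (at_right 0)"
      using evE
    proof eventually_elim
      case (elim e)
      then have e: "0 < e" "e < eps0" by auto
      interpret setting \<delta> e using H[OF e] by blast
      obtain m where m: "6-d < m" "m < 6+d" "RR m e (sI m e) = 0"
        using common_ex[of "6-d" "6+d"] elim d0 by auto
      have mabs: "\<bar>m - 6\<bar> \<le> \<delta>" using m d0 by auto
      have "m = mc e"
        using common_uniq[OF mabs mcabs[OF e], of "sI m e" "sI (mc e) e"] sI[OF mabs] sI[OF mcabs[OF e]] m mc[OF e]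
        by simp
      then show ?case using m d0 by (auto simp: dist_real_def)
    qed
  qed
  have sIlim: "((\<lambda>e. sI (mc e) e) \<longlongrightarrow> 3) (at_right 0)"
  proof (rule order_tendstoI)
    have id: "((\<lambda>e::real. e) \<longlongrightarrow> 0) (at_right 0)" by (rule tendsto_ident_at)
    fix a :: real assume a: "a < 3"
    define a' where "a' = max a (3 - r0)"
    have a': "0 \<le> a'" "a' < 3" "a \<le> a'" using a r0 by (auto simp: a'_def)
    have "II 6 0 a' > II 6 0 3" using a' r0 by (intro mono_Is) auto
    then have "II 6 0 a' > 0" by (simp add: base_vals)
    then have "eventually (\<lambda>e. II (mc e) e a' > 0) (at_right 0)"
      by (rule order_tendstoD(1)[OF tendsto_II[OF P2 id tendsto_const]])
    then show "eventually (\<lambda>e. a < sI (mc e) e) (at_right 0)"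
      using evE
    proof eventually_elim
      case (elim e)
      then have e: "0 < e" "e < eps0" by auto
      interpret setting \<delta> e using H[OF e] by blast
      show ?case using sI_gt[OF mcabs[OF e], of a'] a' elim by simp
    qed
  next
    have id: "((\<lambda>e::real. e) \<longlongrightarrow> 0) (at_right 0)" by (rule tendsto_ident_at)
    fix b :: real assume b: "b > 3"
    have "II 6 0 3 > II 6 0 b" using b r0 by (intro mono_Is) auto
    then have "II 6 0 b < 0" by (simp add: base_vals)
    then have "eventually (\<lambda>e. II (mc e) e b < 0) (at_right 0)"
      by (rule order_tendstoD(2)[OF tendsto_II[OF P2 id tendsto_const]])
    then show "eventually (\<lambda>e. sI (mc e) e < b) (at_right 0)"
      using evE
    proof eventually_elim
      case (elim e)
      then have e: "0 < e" "e < eps0" by auto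
      interpret setting \<delta> e using H[OF e] by blast
      show ?case using sI_lt[OF mcabs[OF e], of b] b elim by simp
    qed
  qed
  have P5: "(\<omega> \<longlongrightarrow> sqrt 3) (at_right 0)"
    unfolding \<omega>_def by (rule tendsto_real_sqrt[OF sIlim])
  show ?thesis
    using eps0 d(1) P1 P2 P3 P4 P5 by blast
qed

end
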